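(* Let $q$ be a power of $2$, let $a,b\in\mathbb{F}_q$ with $b\ne0$, and let $n\ge2$ be an integer. Let $r\ge0$ be such that $2^r$ divides $n+1$ but $2^{r+1}$ does not, and let $m\ge 0$ be defined by $n+1=2^r(m+1)$. Assume $r\ge1$. Then $m$ is even. If $m>0$, then $\hat C_n(a,b)$ is LCD if and only if $$a/b\notin\{-1/b\}\cup\{-1/b+\theta^i+\theta^{-i} : 1\le i\le m/2\},$$ where $\theta\in\overline{\mathbb{F}}_q$ is a primitive $(m+1)$-th root of unity. If $m=0$, then $\hat C_n(a,b)$ is LCD if and only if $a\ne 1$.
   Context: For $a,b\in\mathbb{F}_q$ and $n\ge 2$, $\hat T_n(a,b)$ denotes the $n\times n$ symmetric tridiagonal Toeplitz matrix over $\mathbb{F}_q$ with all diagonal entries equal to $a$, all entries on the first super- and sub-diagonals equal to $b$, and all other entries $0$. $\hat C_n(a,b)$ is the $[2n,n]$ linear code over $\mathbb{F}_q$ with generator matrix $[I_n\mid \hat T_n(a,b)]$. A linear code $C$ is LCD if $C\cap C^\perp=\{0\}$ (Euclidean dual). *)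

theory Defs
  imports "Jordan_Normal_Form.Matrix" "HOL-Algebra.Algebraic_Closure_Type"
begin

definition tridiag_toeplitz :: "nat \<Rightarrow> 'a::field \<Rightarrow> 'a \<Rightarrow> 'a mat" where
  "tridiag_toeplitz n a b = mat n n (\<lambda>(i,j). if i = j then a
       else if i = j + 1 \<or> j = i + 1 then b else 0)"

definition gen_mat_IT :: "nat \<Rightarrow> 'a::field \<Rightarrow> 'a \<Rightarrow> 'a mat" where
  "gen_mat_IT n a b = mat n (2*n) (\<lambda>(i,j). if j < n then (if i = j then 1 else 0)
       else tridiag_toeplitz n a b $$ (i, j - n))"

definition code_of :: "'a::field mat \<Rightarrow> 'a vec set" where
  "code_of G = {v. \<exists>u. dim_vec u = dim_row G \<and> v = transpose_mat G *\<^sub>v u}"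

definition dual_code :: "nat \<Rightarrow> 'a::field vec set \<Rightarrow> 'a vec set" where
  "dual_code N C = {y. dim_vec y = N \<and> (\<forall>x\<in>C. x \<bullet> y = 0)}"

definition is_LCD :: "nat \<Rightarrow> 'a::field vec set \<Rightarrow> bool" where
  "is_LCD N C \<longleftrightarrow> C \<inter> dual_code N C = {0\<^sub>v N}"

definition C_hat :: "nat \<Rightarrow> 'a::field \<Rightarrow> 'a \<Rightarrow> 'a vec set" where
  "C_hat n a b = code_of (gen_mat_IT n a b)"

definition primitive_root_of_unity :: "nat \<Rightarrow> 'a::field \<Rightarrow> bool" where
  "primitive_root_of_unity k \<theta> \<longleftrightarrow> \<theta> ^ k = 1 \<and> (\<forall>j. 0 < j \<and> j < k \<longrightarrow> \<theta> ^ j \<noteq> 1)"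

end

theory Submission
  imports Defs "HOL-Number_Theory.Residues" "HOL-Computational_Algebra.Euclidean_Algorithm" "HOL-Computational_Algebra.Polynomial"
begin


fun R :: "'a::comm_ring_1 \<Rightarrow> nat \<Rightarrow> 'a" where
  "R y 0 = 0" | "R y (Suc 0) = 1" | "R y (Suc (Suc k)) = y * R y (Suc k) - R y k"

lemma R_ident:
  fixes t s :: "'a::comm_ring_1"
  assumes "t * s = 1"
  shows "(t - s) * R (t + s) k = t ^ k - s ^ k"
proof (induction "t+s" k rule: R.induct)
  case (3 k)
  have e: "t * s ^ Suc k = s ^ k" "s * t ^ Suc k = t ^ k"
    using assms by (simp_all add: power_Suc mult.assoc[symmetric] mult.commute)
  have "(t - s) * R (t + s) (Suc (Suc k)) = (t+s) * ((t - s) * R (t + s) (Suc k)) - (t - s) * R (t + s) k"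
    by (simp add: algebra_simps)
  also have "\<dots> = (t+s) * (t ^ Suc k - s ^ Suc k) - (t ^ k - s ^ k)" using 3 by simp
  also have "\<dots> = t ^ Suc (Suc k) - s ^ Suc (Suc k) - (t * s ^ Suc k) + s * t ^ Suc k - (t ^ k - s ^ k)"
    by (simp add: algebra_simps)
  also have "\<dots> = t ^ Suc (Suc k) - s ^ Suc (Suc k)" using e by simp
  finally show ?case .
qed auto

lemma R_zero_even: "R (0::'a::comm_ring_1) (2*j) = 0"
  by (induction j) (auto simp: numeral_2_eq_2)

lemma R_to_ac: "to_ac (R x k) = R (to_ac x) k"
  by (induction x k rule: R.induct) auto

lemma char2:
  fixes x :: "'a::{finite,field}"
  assumes "card (UNIV :: 'a set) = 2 ^ k"
  shows "x + x = 0"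
proof -
  have pos: "CHAR('a) > 0" by (simp add: finite_imp_CHAR_pos)
  have p: "Factorial_Ring.prime CHAR('a)" using prime_CHAR_semidom[OF pos] .
  have "CHAR('a) dvd 2 ^ k" using CHAR_dvd_CARD[where 'a='a] assms by simp
  hence "CHAR('a) dvd 2" using p prime_dvd_power by blast
  hence "CHAR('a) \<le> 2" by (rule dvd_imp_le) auto
  moreover have "CHAR('a) \<ge> 2" using p by (rule prime_ge_2_nat)
  ultimately have "CHAR('a) = 2" by simp
  hence "(2::'a) = 0" by (metis of_nat_CHAR of_nat_numeral)
  thus ?thesis by (metis mult_2 mult_zero_left)
qed




context
  fixes ch :: "'b::alg_closed_field itself"
  assumes ch2: "\<And>x::'b. x + x = 0"
begin

lemma neg_eq: "- (x::'b) = x"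
  using ch2[of x] by (simp add: add_eq_0_iff2)

lemma sq_add: "((x::'b) + y)^2 = x^2 + y^2"
proof -
  have "(x+y)^2 = x^2 + y^2 + (x*y + x*y)" by (simp add: power2_eq_square algebra_simps)
  thus ?thesis using ch2[of "x*y"] by simp
qed

lemma pow2r_add: "((x::'b) + y)^(2^r) = x^(2^r) + y^(2^r)"
proof (induction r)
  case (Suc r)
  have "(x+y)^(2^Suc r) = ((x+y)^(2^r))^2" by (simp add: power_mult[symmetric] mult.commute)
  also have "\<dots> = (x^(2^r))^2 + (y^(2^r))^2" using Suc by (simp add: sq_add)
  also have "\<dots> = x^(2^Suc r) + y^(2^Suc r)" by (simp add: power_mult[symmetric] mult.commute)
  finally show ?case .
qed simp

lemma pow2r_eq1: "(x::'b)^(2^r) = 1 \<Longrightarrow> x = 1"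
proof -
  assume "x^(2^r) = 1"
  hence "(x + 1)^(2^r) = 0" using pow2r_add[of x 1 r] ch2[of 1] by simp
  hence "x + 1 = 0" by simp
  thus "x = 1" by (metis add_eq_0_iff2 neg_eq)
qed

lemma R_root_fwd:
  fixes y :: "'b"
  assumes N: "N = 2^r*(m+1)" and R0: "R y N = 0"
  shows "y = 0 \<or> (\<exists>t. t^(m+1) = 1 \<and> t \<noteq> 1 \<and> y = t + inverse t)"
proof -
  define f where "f = (\<lambda>k::nat. if k = 1 then - y else (1::'b))"
  have "\<exists>x. (\<Sum>k\<le>2. f k * x ^ k) = 0"
    by (rule alg_closed) (auto simp: f_def)
  then obtain t where "(\<Sum>k\<le>2. f k * t ^ k) = 0" by blast
  hence teq: "1 - y * t + t^2 = 0"
    by (simp add: f_def numeral_2_eq_2 atMost_Suc algebra_simps)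
  have t0: "t \<noteq> 0" using teq by auto
  define s where "s = inverse t"
  have ts: "t * s = 1" using t0 by (simp add: s_def)
  have "y * t = 1 + t * t" using teq by (simp add: power2_eq_square algebra_simps eq_neg_iff_add_eq_0[symmetric])
  hence "y * t = t * t + 1" by (simp add: add.commute)
  hence y: "y = t + s" using t0 unfolding s_def by (simp add: field_simps)
  have id: "(t - s) * R y N = t^N - s^N" using R_ident[OF ts] y by simp
  show ?thesis
  proof (cases "t = s")
    case True
    hence "t^2 = 1" using ts by (simp add: power2_eq_square)
    hence "t^(2^1) = 1" by simp
    hence "t = 1" by (rule pow2r_eq1)
    hence "y = 0" using y True ch2[of 1] by simp
    thus ?thesis ..
  next
    case False
    hence "t^N = s^N" using id R0 by simp
    hence "t^N * t^N = 1" by (metis power_mult_distrib ts power_one mult.commute)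
    moreover have "(t^(m+1))^(2^Suc r) = t^N * t^N"
    proof -
      have "(t^(m+1))^(2^Suc r) = t^((m+1)*2^Suc r)" by (simp only: power_mult)
      also have "(m+1)*2^Suc r = N + N" by (simp add: N)
      finally show ?thesis by (simp add: power_add)
    qed
    ultimately have "(t^(m+1))^(2^Suc r) = 1" by simp
    hence tm: "t^(m+1) = 1" by (rule pow2r_eq1)
    have "t \<noteq> 1" using False ts by auto
    thus ?thesis using tm y s_def by blast
  qed
qed

lemma R_root_bwd:
  fixes t :: "'b"
  assumes N: "N = 2^r*(m+1)" and tm: "t^(m+1) = 1" and t1: "t \<noteq> 1"
  shows "R (t + inverse t) N = 0"
proof -
  have t0: "t \<noteq> 0" using tm by (auto simp: power_0_left)
  define s where "s = inverse t"
  have ts: "t * s = 1" using t0 by (simp add: s_def)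
  have "t \<noteq> s"
  proof
    assume "t = s"
    hence "t^(2^1) = 1" using ts by (simp add: power2_eq_square)
    hence "t = 1" by (rule pow2r_eq1)
    thus False using t1 by simp
  qed
  moreover have "t^N = 1"
  proof -
    have "t^N = (t^(m+1))^(2^r)" unfolding N by (simp only: power_mult mult.commute)
    thus ?thesis using tm by simp
  qed
  moreover have "s^N = 1" using \<open>t^N = 1\<close> by (metis s_def power_inverse inverse_1)
  ultimately have "(t - s) * R (t + s) N = 0" "t - s \<noteq> 0" using R_ident[OF ts, of N] by simp_all
  thus ?thesis using s_def by simp
qed

end




lemma theta_roots:
  fixes \<theta> :: "'b::field"
  assumes prim: "primitive_root_of_unity (m + 1) \<theta>" and ev: "even m"
  shows "(\<exists>t. t^(m+1) = 1 \<and> t \<noteq> 1 \<and> y = t + inverse t) \<longleftrightarrow>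
         (\<exists>i. 1 \<le> i \<and> i \<le> m div 2 \<and> y = \<theta>^i + inverse \<theta>^i)"
proof
  have th1: "\<theta>^(m+1) = 1" and thj: "\<And>j. 0 < j \<Longrightarrow> j < m+1 \<Longrightarrow> \<theta>^j \<noteq> 1"
    using prim unfolding primitive_root_of_unity_def by auto
  have th0: "\<theta> \<noteq> 0" using th1 by (auto simp: power_0_left)
  assume "\<exists>t. t^(m+1) = 1 \<and> t \<noteq> 1 \<and> y = t + inverse t"
  then obtain t where tm: "t^(m+1) = 1" and t1: "t \<noteq> 1" and y: "y = t + inverse t" by blast
  define p :: "'b poly" where "p = monom 1 (m+1) - 1"
  have pp: "poly p x = x^(m+1) - 1" for x by (simp add: p_def poly_monom)
  have p0: "p \<noteq> 0" proof
    assume "p = 0" hence "poly p 0 = 0" by simp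
    thus False using pp[of 0] by simp
  qed
  have dp: "degree p \<le> m+1" unfolding p_def by (intro degree_diff_le degree_monom_le) simp
  define S where "S = {x. poly p x = 0}"
  have finS: "finite S" unfolding S_def using p0 by (rule poly_roots_finite)
  have cS: "card S \<le> m+1" unfolding S_def using card_poly_roots_bound[OF p0] dp by simp
  have inj: "inj_on (\<lambda>j. \<theta>^j) {..<m+1}"
  proof (rule inj_onI)
    fix i j assume i: "i \<in> {..<m+1}" and j: "j \<in> {..<m+1}" and e: "\<theta>^i = \<theta>^j"
    show "i = j"
    proof (rule ccontr)
      assume "i \<noteq> j"
      then consider "i < j" | "j < i" by linarith
      thus False
      proof cases
        case 1
        have "\<theta>^j = \<theta>^i * \<theta>^(j-i)" using 1 by (simp add: power_add[symmetric])
        hence "\<theta>^(j-i) = 1" using e th0 by simp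
        moreover have "j - i < m+1" using j by simp
        ultimately show False using thj[of "j-i"] 1 by simp
      next
        case 2
        have "\<theta>^i = \<theta>^j * \<theta>^(i-j)" using 2 by (simp add: power_add[symmetric])
        hence "\<theta>^(i-j) = 1" using e th0 by simp
        moreover have "i - j < m+1" using i by simp
        ultimately show False using thj[of "i-j"] 2 by simp
      qed
    qed
  qed
  have sub: "(\<lambda>j. \<theta>^j) ` {..<m+1} \<subseteq> S"
  proof
    fix x assume "x \<in> (\<lambda>j. \<theta>^j) ` {..<m+1}"
    then obtain j where x: "x = \<theta>^j" by blast
    have "x^(m+1) = (\<theta>^(m+1))^j" unfolding x by (metis power_mult mult.commute)
    thus "x \<in> S" using th1 by (simp add: S_def pp)
  qed
  have cI: "card ((\<lambda>j. \<theta>^j) ` {..<m+1}) = m+1" using card_image[OF inj] by simp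
  have "card ((\<lambda>j. \<theta>^j) ` {..<m+1}) \<le> card S" using card_mono[OF finS sub] .
  hence "card ((\<lambda>j. \<theta>^j) ` {..<m+1}) = card S" using cI cS by simp
  hence eqS: "(\<lambda>j. \<theta>^j) ` {..<m+1} = S" using card_subset_eq[OF finS sub] by blast
  have "t \<in> S" using tm by (simp add: S_def pp)
  then obtain j where j: "j < m+1" and tj: "t = \<theta>^j" using eqS by auto
  have j0: "j \<noteq> 0" using t1 tj by (cases j) auto
  show "\<exists>i. 1 \<le> i \<and> i \<le> m div 2 \<and> y = \<theta>^i + inverse \<theta>^i"
  proof (cases "j \<le> m div 2")
    case True
    thus ?thesis using j0 y tj by (intro exI[of _ j]) (auto simp: power_inverse)
  next
    case False
    define i where "i = m + 1 - j"
    obtain q where q: "m = 2*q" using ev by blast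
    have i1: "1 \<le> i" "i \<le> m div 2" using False j unfolding i_def q by auto
    have "\<theta>^i * \<theta>^j = 1" using th1 j by (simp add: i_def power_add[symmetric])
    hence "t * \<theta>^i = 1" using tj by (simp add: mult.commute)
    hence "inverse t = \<theta>^i" by (rule inverse_unique)
    hence "\<theta>^i = inverse t" by simp
    hence "inverse \<theta> ^ i = t" by (simp add: power_inverse)
    hence "y = \<theta>^i + inverse \<theta>^i" using y \<open>\<theta>^i = inverse t\<close> by (simp add: add.commute)
    thus ?thesis using i1 by blast
  qed
next
  have th1: "\<theta>^(m+1) = 1" and thj: "\<And>j. 0 < j \<Longrightarrow> j < m+1 \<Longrightarrow> \<theta>^j \<noteq> 1"
    using prim unfolding primitive_root_of_unity_def by auto
  assume "\<exists>i. 1 \<le> i \<and> i \<le> m div 2 \<and> y = \<theta>^i + inverse \<theta>^i"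
  then obtain i where i: "1 \<le> i" "i \<le> m div 2" and y: "y = \<theta>^i + inverse \<theta>^i" by blast
  have "(\<theta>^i)^(m+1) = (\<theta>^(m+1))^i" by (metis power_mult mult.commute)
  hence "(\<theta>^i)^(m+1) = 1" using th1 by simp
  moreover have "\<theta>^i \<noteq> 1" using thj[of i] i by auto
  ultimately show "\<exists>t. t^(m+1) = 1 \<and> t \<noteq> 1 \<and> y = t + inverse t"
    using y by (intro exI[of _ "\<theta>^i"]) (simp add: power_inverse)
qed




lemma T_row:
  fixes a b :: "'a::field"
  assumes u: "u \<in> carrier_vec n" and i: "i < n"
  shows "(tridiag_toeplitz n a b *\<^sub>v u) $ i =
     a * u$i + (if 0 < i then b * u$(i-1) else 0) + (if i+1 < n then b * u$(i+1) else 0)"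
proof -
  have "(tridiag_toeplitz n a b *\<^sub>v u) $ i = (\<Sum>j\<in>{0..<n}. tridiag_toeplitz n a b $$ (i,j) * u$j)"
    using u i by (simp add: tridiag_toeplitz_def scalar_prod_def)
  also have "\<dots> = (\<Sum>j\<in>{0..<n}. (if j = i then a * u$j else 0)
      + (if j = i - 1 \<and> 0 < i then b * u$j else 0) + (if j = i + 1 then b * u$j else 0))"
  proof (intro sum.cong refl)
    fix j assume j: "j \<in> {0..<n}"
    have e: "tridiag_toeplitz n a b $$ (i,j) = (if i = j then a else if i = j + 1 \<or> j = i + 1 then b else 0)"
      using i j by (simp add: tridiag_toeplitz_def)
    show "tridiag_toeplitz n a b $$ (i,j) * u$j = (if j = i then a * u$j else 0)
      + (if j = i - 1 \<and> 0 < i then b * u$j else 0) + (if j = i + 1 then b * u$j else 0)"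
      unfolding e by (cases "j = i"; cases "j = i+1"; cases "j = i - 1 \<and> 0 < i") auto
  qed
  also have "\<dots> = a * u$i + (if 0 < i then b * u$(i-1) else 0) + (if i+1 < n then b * u$(i+1) else 0)"
  proof -
    have s1: "(\<Sum>j\<in>{0..<n}. (if j = i then a * u$j else 0)) = a * u$i" using i by simp
    have s2: "(\<Sum>j\<in>{0..<n}. (if j = i - 1 \<and> 0 < i then b * u$j else 0)) = (if 0 < i then b * u$(i-1) else 0)"
    proof (cases "0 < i")
      case True
      have "(\<Sum>j\<in>{0..<n}. (if j = i - 1 \<and> 0 < i then b * u$j else 0)) = (\<Sum>j\<in>{0..<n}. (if j = i - 1 then b * u$j else 0))"
        using True by (intro sum.cong) auto
      also have "\<dots> = b * u$(i-1)" using i by simp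
      finally show ?thesis using True by simp
    qed simp
    have s3: "(\<Sum>j\<in>{0..<n}. (if j = i + 1 then b * u$j else 0)) = (if i+1 < n then b * u$(i+1) else 0)"
      by simp
    show ?thesis unfolding sum.distrib s1 s2 s3 ..
  qed
  finally show ?thesis .
qed

lemma G_dims[simp]: "dim_row (gen_mat_IT n a b) = n" "dim_col (gen_mat_IT n a b) = 2*n"
  by (simp_all add: gen_mat_IT_def)

lemma T_dims[simp]: "dim_row (tridiag_toeplitz n a b) = n" "dim_col (tridiag_toeplitz n a b) = n"
  by (simp_all add: tridiag_toeplitz_def)

lemma T_sym: "i < n \<Longrightarrow> j < n \<Longrightarrow> tridiag_toeplitz n a b $$ (i,j) = tridiag_toeplitz n a b $$ (j,i)"
  by (auto simp: tridiag_toeplitz_def)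

lemma GT_idx:
  fixes a b :: "'a::field"
  assumes u: "u \<in> carrier_vec n" and j: "j < 2*n"
  shows "(transpose_mat (gen_mat_IT n a b) *\<^sub>v u) $ j =
    (if j < n then u$j else (tridiag_toeplitz n a b *\<^sub>v u) $ (j-n))"
proof -
  have "(transpose_mat (gen_mat_IT n a b) *\<^sub>v u) $ j = (\<Sum>i\<in>{0..<n}. gen_mat_IT n a b $$ (i,j) * u$i)"
    using u j by (simp add: scalar_prod_def)
  also have "\<dots> = (if j < n then u$j else (tridiag_toeplitz n a b *\<^sub>v u) $ (j-n))"
  proof (cases "j < n")
    case True
    have "(\<Sum>i\<in>{0..<n}. gen_mat_IT n a b $$ (i,j) * u$i) = (\<Sum>i\<in>{0..<n}. if i = j then u$i else 0)"
      using True j by (intro sum.cong refl) (simp add: gen_mat_IT_def)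
    also have "\<dots> = u$j" using True by simp
    finally show ?thesis using True by simp
  next
    case False
    have "(\<Sum>i\<in>{0..<n}. gen_mat_IT n a b $$ (i,j) * u$i) = (\<Sum>i\<in>{0..<n}. tridiag_toeplitz n a b $$ (j-n,i) * u$i)"
      using False j by (intro sum.cong refl) (simp add: gen_mat_IT_def T_sym)
    also have "\<dots> = (tridiag_toeplitz n a b *\<^sub>v u) $ (j-n)"
      using False j u by (simp add: scalar_prod_def)
    finally show ?thesis using False by simp
  qed
  finally show ?thesis .
qed

lemma G_idx:
  fixes a b :: "'a::field"
  assumes v: "v \<in> carrier_vec (2*n)" and i: "i < n"
  shows "(gen_mat_IT n a b *\<^sub>v v) $ i = v$i + (tridiag_toeplitz n a b *\<^sub>v vec n (\<lambda>l. v$(n+l))) $ i"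
proof -
  let ?g = "\<lambda>j. gen_mat_IT n a b $$ (i,j) * v$j"
  have "(gen_mat_IT n a b *\<^sub>v v) $ i = sum ?g {0..<2*n}"
    using v i by (simp add: scalar_prod_def)
  also have "\<dots> = sum ?g {0..<n} + sum ?g {n..<2*n}"
    by (rule sum.atLeastLessThan_concat[symmetric]) auto
  also have "sum ?g {0..<n} = v$i"
  proof -
    have "sum ?g {0..<n} = (\<Sum>j\<in>{0..<n}. if j = i then v$j else 0)"
      using i by (intro sum.cong refl) (auto simp: gen_mat_IT_def)
    also have "\<dots> = v$i" using i by simp
    finally show ?thesis .
  qed
  also have "sum ?g {n..<2*n} = sum ?g {0+n..<n+n}" by (simp add: mult_2)
  also have "\<dots> = (\<Sum>l\<in>{0..<n}. ?g (l+n))" by (rule sum.shift_bounds_nat_ivl)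
  also have "\<dots> = (\<Sum>l\<in>{0..<n}. tridiag_toeplitz n a b $$ (i,l) * vec n (\<lambda>l. v$(n+l)) $ l)"
    using i by (intro sum.cong refl) (auto simp: gen_mat_IT_def add.commute)
  also have "\<dots> = (tridiag_toeplitz n a b *\<^sub>v vec n (\<lambda>l. v$(n+l))) $ i"
    using i by (simp add: scalar_prod_def)
  finally show ?thesis .
qed

lemma G_carrier: "gen_mat_IT n a b \<in> carrier_mat n (2*n)"
  by (rule carrier_matI) simp_all




lemma dual_char:
  fixes a b :: "'a::field"
  shows "y \<in> dual_code (2*n) (C_hat n a b) \<longleftrightarrow> y \<in> carrier_vec (2*n) \<and> gen_mat_IT n a b *\<^sub>v y = 0\<^sub>v n"
proof
  let ?G = "gen_mat_IT n a b"
  assume y: "y \<in> dual_code (2*n) (C_hat n a b)"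
  hence yc: "y \<in> carrier_vec (2*n)" unfolding dual_code_def by (blast intro: carrier_vecI)
  have "(?G *\<^sub>v y) $ i = 0" if i: "i < n" for i
  proof -
    have "transpose_mat ?G *\<^sub>v unit_vec n i \<in> C_hat n a b"
      unfolding C_hat_def code_of_def by (intro CollectI exI[of _ "unit_vec n i"]) simp
    moreover have "\<forall>x\<in>C_hat n a b. x \<bullet> y = 0" using y unfolding dual_code_def by blast
    ultimately have "(transpose_mat ?G *\<^sub>v unit_vec n i) \<bullet> y = 0" by blast
    also have "(transpose_mat ?G *\<^sub>v unit_vec n i) \<bullet> y = unit_vec n i \<bullet> (?G *\<^sub>v y)"
      by (rule transpose_vec_mult_scalar[OF G_carrier yc]) simp
    also have "\<dots> = (?G *\<^sub>v y) $ i"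
    proof -
      have gyc: "?G *\<^sub>v y \<in> carrier_vec n" by (rule carrier_vecI) simp
      show ?thesis by (rule scalar_prod_left_unit[OF gyc i])
    qed
    finally show ?thesis .
  qed
  hence "?G *\<^sub>v y = 0\<^sub>v n" by (intro eq_vecI) auto
  thus "y \<in> carrier_vec (2*n) \<and> ?G *\<^sub>v y = 0\<^sub>v n" using yc by simp
next
  let ?G = "gen_mat_IT n a b"
  assume "y \<in> carrier_vec (2*n) \<and> ?G *\<^sub>v y = 0\<^sub>v n"
  hence yc: "y \<in> carrier_vec (2*n)" and gy: "?G *\<^sub>v y = 0\<^sub>v n" by auto
  have all0: "\<forall>x\<in>C_hat n a b. x \<bullet> y = 0"
  proof
    fix x assume "x \<in> C_hat n a b"
    then obtain u where u: "dim_vec u = n" and x: "x = transpose_mat ?G *\<^sub>v u"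
      unfolding C_hat_def code_of_def by auto
    have uc: "u \<in> carrier_vec n" using u by (rule carrier_vecI)
    have "x \<bullet> y = u \<bullet> (?G *\<^sub>v y)" unfolding x by (rule transpose_vec_mult_scalar[OF G_carrier yc uc])
    thus "x \<bullet> y = 0" using gy uc by simp
  qed
  have "dim_vec y = 2*n" using yc by (rule carrier_vecD)
  thus "y \<in> dual_code (2*n) (C_hat n a b)" using all0 unfolding dual_code_def by blast
qed


lemma GT_inj:
  fixes a b :: "'a::field"
  assumes u: "u \<in> carrier_vec n" and z: "transpose_mat (gen_mat_IT n a b) *\<^sub>v u = 0\<^sub>v (2*n)"
  shows "u = 0\<^sub>v n"
proof (rule eq_vecI)
  fix i assume "i < dim_vec (0\<^sub>v n :: 'a vec)"
  hence i: "i < n" by simp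
  have "u $ i = (transpose_mat (gen_mat_IT n a b) *\<^sub>v u) $ i" using GT_idx[OF u, of i a b] i by simp
  thus "u $ i = 0\<^sub>v n $ i" using z i by simp
qed (use u in simp)


lemma LCD_iff_GGT:
  fixes a b :: "'a::field"
  shows "is_LCD (2*n) (C_hat n a b) \<longleftrightarrow>
    (\<forall>u\<in>carrier_vec n. gen_mat_IT n a b *\<^sub>v (transpose_mat (gen_mat_IT n a b) *\<^sub>v u) = 0\<^sub>v n \<longrightarrow> u = 0\<^sub>v n)"
  (is "_ \<longleftrightarrow> ?R")
proof -
  let ?G = "gen_mat_IT n a b"
  have Cc: "x \<in> C_hat n a b \<longleftrightarrow> (\<exists>u\<in>carrier_vec n. x = transpose_mat ?G *\<^sub>v u)" for x
    unfolding C_hat_def code_of_def by (auto intro: carrier_vecI dest: carrier_vecD)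
  have z: "transpose_mat ?G *\<^sub>v 0\<^sub>v n = 0\<^sub>v (2*n)"
    by (intro eq_vecI) (auto simp: scalar_prod_def)
  have gtc: "transpose_mat ?G *\<^sub>v u \<in> carrier_vec (2*n)" for u by (rule carrier_vecI) simp
  show ?thesis
  proof
    assume L: "is_LCD (2*n) (C_hat n a b)"
    show ?R
    proof (intro ballI impI)
      fix u :: "'a vec" assume u: "u \<in> carrier_vec n" and g: "?G *\<^sub>v (transpose_mat ?G *\<^sub>v u) = 0\<^sub>v n"
      have "transpose_mat ?G *\<^sub>v u \<in> C_hat n a b \<inter> dual_code (2*n) (C_hat n a b)"
        using u g gtc by (auto simp: Cc dual_char)
      hence "transpose_mat ?G *\<^sub>v u = 0\<^sub>v (2*n)" using L unfolding is_LCD_def by blast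
      thus "u = 0\<^sub>v n" by (rule GT_inj[OF u])
    qed
  next
    assume R: ?R
    have "C_hat n a b \<inter> dual_code (2*n) (C_hat n a b) = {0\<^sub>v (2*n)}"
    proof
      show "C_hat n a b \<inter> dual_code (2*n) (C_hat n a b) \<subseteq> {0\<^sub>v (2*n)}"
      proof
        fix x assume "x \<in> C_hat n a b \<inter> dual_code (2*n) (C_hat n a b)"
        then obtain u where u: "u \<in> carrier_vec n" and x: "x = transpose_mat ?G *\<^sub>v u"
          and g: "?G *\<^sub>v x = 0\<^sub>v n" by (auto simp: Cc dual_char)
        have "u = 0\<^sub>v n" using R u g x by blast
        thus "x \<in> {0\<^sub>v (2*n)}" using x z by simp
      qed
      have "0\<^sub>v (2*n) \<in> C_hat n a b" unfolding Cc using z zero_carrier_vec by metis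
      moreover have "?G *\<^sub>v 0\<^sub>v (2*n) = 0\<^sub>v n" by (intro eq_vecI) (auto simp: scalar_prod_def)
      ultimately show "{0\<^sub>v (2*n)} \<subseteq> C_hat n a b \<inter> dual_code (2*n) (C_hat n a b)"
        by (auto simp: dual_char)
    qed
    thus "is_LCD (2*n) (C_hat n a b)" by (simp add: is_LCD_def)
  qed
qed




lemma neg2: "(\<And>x::'a::ring. x + x = 0) \<Longrightarrow> - (y::'a) = y"
  by (metis add_eq_0_iff2)

lemma GGT:
  fixes a b :: "'a::field"
  assumes u: "u \<in> carrier_vec n"
  shows "gen_mat_IT n a b *\<^sub>v (transpose_mat (gen_mat_IT n a b) *\<^sub>v u)
       = u + tridiag_toeplitz n a b *\<^sub>v (tridiag_toeplitz n a b *\<^sub>v u)"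
proof (rule eq_vecI)
  let ?G = "gen_mat_IT n a b" and ?T = "tridiag_toeplitz n a b"
  let ?v = "transpose_mat ?G *\<^sub>v u"
  have vc: "?v \<in> carrier_vec (2*n)" by (rule carrier_vecI) simp
  have un: "dim_vec u = n" using u by (rule carrier_vecD)
  have ve: "vec n (\<lambda>l. ?v $ (n+l)) = ?T *\<^sub>v u"
  proof (rule eq_vecI)
    fix l assume "l < dim_vec (?T *\<^sub>v u)"
    hence l: "l < n" by simp
    have "?v $ (n+l) = (?T *\<^sub>v u) $ l" using GT_idx[OF u, of "n+l" a b] l by simp
    thus "vec n (\<lambda>l. ?v $ (n+l)) $ l = (?T *\<^sub>v u) $ l" using l by simp
  qed simp
  fix i assume "i < dim_vec (u + ?T *\<^sub>v (?T *\<^sub>v u))"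
  hence i: "i < n" using un by simp
  show "(?G *\<^sub>v ?v) $ i = (u + ?T *\<^sub>v (?T *\<^sub>v u)) $ i"
    using G_idx[OF vc i] ve GT_idx[OF u, of i] i un by simp
qed (use u in \<open>simp add: carrier_vecD\<close>)

lemma V_char:
  fixes a b :: "'a::field"
  assumes ch2: "\<And>x::'a. x + x = 0" and u: "u \<in> carrier_vec n"
  defines "T \<equiv> tridiag_toeplitz n a b"
  shows "T *\<^sub>v (T *\<^sub>v u + u) + (T *\<^sub>v u + u) = u + T *\<^sub>v (T *\<^sub>v u)"
proof -
  have Tc: "T \<in> carrier_mat n n" unfolding T_def by (rule carrier_matI) simp_all
  have tu: "T *\<^sub>v u \<in> carrier_vec n" using Tc by (rule mult_mat_vec_carrier[OF _ u])
  have "T *\<^sub>v (T *\<^sub>v u + u) = T *\<^sub>v (T *\<^sub>v u) + T *\<^sub>v u"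
    by (rule mult_add_distrib_mat_vec[OF Tc tu u])
  moreover have "T *\<^sub>v (T *\<^sub>v u) + T *\<^sub>v u + (T *\<^sub>v u + u) = u + T *\<^sub>v (T *\<^sub>v u)"
  proof (rule eq_vecI)
    fix i assume "i < dim_vec (u + T *\<^sub>v (T *\<^sub>v u))"
    hence i: "i < n" using u Tc by (simp add: carrier_vecD carrier_matD)
    have un: "dim_vec u = n" using u by (rule carrier_vecD)
    have "(T *\<^sub>v u) $ i + (T *\<^sub>v u) $ i = 0" by (rule ch2)
    thus "(T *\<^sub>v (T *\<^sub>v u) + T *\<^sub>v u + (T *\<^sub>v u + u)) $ i = (u + T *\<^sub>v (T *\<^sub>v u)) $ i"
      using i un Tc by (simp add: algebra_simps)
  qed (use u Tc in \<open>simp add: carrier_vecD carrier_matD\<close>)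
  ultimately show ?thesis by simp
qed

lemma solve_lin:
  fixes b c p q w :: "'a::field"
  assumes "b \<noteq> 0" "c*p + b*q + b*w = 0"
  shows "w = -(c/b*p) - q"
proof -
  have "b*w = -(c*p) - b*q" using assms(2) by (simp add: eq_neg_iff_add_eq_0 algebra_simps)
  thus ?thesis using assms(1) by (simp add: field_simps)
qed




lemma kernel_R:
  fixes c b :: "'a::field"
  assumes ch2: "\<And>x::'a. x+x=0" and b: "b \<noteq> 0" and n: "n \<ge> 1"
  shows "(\<forall>u\<in>carrier_vec n. (\<forall>i<n. c*u$i + (if 0<i then b*u$(i-1) else 0)
            + (if i+1<n then b*u$(i+1) else 0) = 0) \<longrightarrow> u = 0\<^sub>v n)
         \<longleftrightarrow> R (c/b) (n+1) \<noteq> 0"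
proof -
  define x where "x = c/b"
  have cx: "b * x = c" using b by (simp add: x_def)
  have ng: "\<And>y::'a. -y = y" by (rule neg2[OF ch2])
  show ?thesis unfolding x_def[symmetric]
  proof
    assume H: "\<forall>u\<in>carrier_vec n. (\<forall>i<n. c*u$i + (if 0<i then b*u$(i-1) else 0)
            + (if i+1<n then b*u$(i+1) else 0) = 0) \<longrightarrow> u = 0\<^sub>v n"
    show "R x (n+1) \<noteq> 0"
    proof
      assume R0: "R x (n+1) = 0"
      define u where "u = vec n (\<lambda>i. R x (i+1))"
      have uc: "u \<in> carrier_vec n" unfolding u_def by simp
      have "c*u$i + (if 0<i then b*u$(i-1) else 0) + (if i+1<n then b*u$(i+1) else 0) = 0"
        if i: "i < n" for i
      proof -
        have e0: "u$i = R x (i+1)" using i by (simp add: u_def)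
        have e1: "(if 0<i then b*u$(i-1) else 0) = b * R x i"
          using i by (cases i) (auto simp: u_def)
        have e2: "(if i+1<n then b*u$(i+1) else 0) = b * R x (i+2)"
        proof (cases "i+1<n")
          case True thus ?thesis by (simp add: u_def)
        next
          case False
          hence "i + 2 = n + 1" using i by simp
          thus ?thesis using False R0 by simp
        qed
        have e3: "R x (i+2) = x * R x (i+1) - R x i"
          by (simp add: numeral_2_eq_2)
        have "c * R x (i+1) + b * R x i + b * (x * R x (i+1) - R x i) = (c + c) * R x (i+1)"
          using cx by (simp add: algebra_simps)
        also have "\<dots> = 0" using ch2[of c] by simp
        finally show ?thesis using e0 e1 e2 e3 by simp
      qed
      hence "u = 0\<^sub>v n" using H uc by blast
      moreover have "u $ 0 = 1" using n by (simp add: u_def)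
      ultimately show False using n by simp
    qed
  next
    assume Rn: "R x (n+1) \<noteq> 0"
    show "\<forall>u\<in>carrier_vec n. (\<forall>i<n. c*u$i + (if 0<i then b*u$(i-1) else 0)
            + (if i+1<n then b*u$(i+1) else 0) = 0) \<longrightarrow> u = 0\<^sub>v n"
    proof (intro ballI impI)
      fix u :: "'a vec" assume uc: "u \<in> carrier_vec n"
        and E: "\<forall>i<n. c*u$i + (if 0<i then b*u$(i-1) else 0)
            + (if i+1<n then b*u$(i+1) else 0) = 0"
      have un: "dim_vec u = n" using uc by (rule carrier_vecD)
      have claim: "(k<n \<longrightarrow> u$k = u$0 * R x (k+1)) \<and> (k+1<n \<longrightarrow> u$(k+1) = u$0 * R x (k+2))" for k
      proof (induction k)
        case 0
        have h: "0 + 1 < n \<Longrightarrow> u$(0+1) = u$0 * R x (0+2)"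
        proof -
          assume "0 + 1 < n"
          hence "c*u$0 + b*0 + b*u$1 = 0" using E[rule_format, of 0] n by simp
          hence "u$1 = -(c/b*u$0) - 0" by (rule solve_lin[OF b])
          thus ?thesis using ng by (simp add: x_def numeral_2_eq_2 mult.commute)
        qed
        show ?case by (intro conjI impI) (simp, rule h)
      next
        case (Suc k)
        have "Suc k + 1 < n \<Longrightarrow> u$(Suc k + 1) = u$0 * R x (Suc k + 2)"
        proof -
          assume lt: "Suc k + 1 < n"
          have "c*u$(k+1) + b*u$k + b*u$(k+2) = 0" using E[rule_format, of "k+1"] lt
            by (simp add: numeral_2_eq_2)
          hence "u$(k+2) = -(c/b*u$(k+1)) - u$k" by (rule solve_lin[OF b])
          also have "\<dots> = x * (u$0 * R x (k+2)) - u$0 * R x (k+1)"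
          proof -
            have u1: "u$(k+1) = u$0 * R x (k+2)" and u0: "u$k = u$0 * R x (k+1)"
              using Suc.IH lt by auto
            show ?thesis unfolding ng[of "c/b*u$(k+1)"] unfolding u1 u0 x_def by simp
          qed
          also have "\<dots> = u$0 * R x (Suc k + 2)"
            by (simp add: numeral_2_eq_2 algebra_simps)
          finally show ?thesis by (simp add: numeral_2_eq_2)
        qed
        thus ?case using Suc.IH by simp
      qed
      have all: "u$k = u$0 * R x (k+1)" if "k < n" for k using claim[of k] that by simp
      have q: "(if 0<n-1 then u$(n-1-1) else 0) = u$0 * R x (n-1)"
      proof (cases "0 < n-1")
        case True
        have "\<exists>m. n = m+2" using True by presburger
        then obtain m where nm: "n = m + 2" by blast
        show ?thesis using True all[of m] by (simp add: nm)
      next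
        case False hence "n - 1 = 0" by simp
        thus ?thesis by simp
      qed
      have "c*u$(n-1) + b*(if 0<n-1 then u$(n-1-1) else 0) + b*0 = 0"
        using E[rule_format, of "n-1"] n by (cases "0 < n-1") auto
      hence "0 = -(c/b*u$(n-1)) - (if 0<n-1 then u$(n-1-1) else 0)" by (rule solve_lin[OF b])
      hence "0 = x * (u$0 * R x n) - u$0 * R x (n-1)"
      proof -
        assume h: "0 = -(c/b*u$(n-1)) - (if 0<n-1 then u$(n-1-1) else 0)"
        have un1: "u$(n-1) = u$0 * R x n" using all[of "n-1"] n by simp
        show ?thesis using h unfolding ng[of "c/b*u$(n-1)"] unfolding q un1 x_def by simp
      qed
      also have "\<dots> = u$0 * R x (n+1)"
      proof -
        obtain m where nm: "n = Suc m" using n by (cases n) auto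
        have "R x (n+1) = x * R x n - R x (n-1)" by (simp add: nm)
        thus ?thesis by (simp add: right_diff_distrib mult.left_commute)
      qed
      finally have "u$0 = 0" using Rn by simp
      thus "u = 0\<^sub>v n" using all un by (intro eq_vecI) auto
    qed
  qed
qed




lemma T_zero: "tridiag_toeplitz n a b *\<^sub>v 0\<^sub>v n = (0\<^sub>v n :: 'a::field vec)"
  by (intro eq_vecI) (auto simp: scalar_prod_def)

lemma LCD_iff_R:
  fixes a b :: "'a::field"
  assumes ch2: "\<And>x::'a. x+x=0" and b: "b \<noteq> 0" and n: "n \<ge> 1"
  shows "is_LCD (2*n) (C_hat n a b) \<longleftrightarrow> R ((a+1)/b) (n+1) \<noteq> 0"
proof -
  let ?T = "tridiag_toeplitz n a b"
  have Tc: "?T \<in> carrier_mat n n" by (rule carrier_matI) simp_all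
  have s1: "is_LCD (2*n) (C_hat n a b) \<longleftrightarrow> (\<forall>u\<in>carrier_vec n. u + ?T *\<^sub>v (?T *\<^sub>v u) = 0\<^sub>v n \<longrightarrow> u = 0\<^sub>v n)"
    unfolding LCD_iff_GGT by (auto simp: GGT)
  have s2: "(\<forall>u\<in>carrier_vec n. u + ?T *\<^sub>v (?T *\<^sub>v u) = 0\<^sub>v n \<longrightarrow> u = 0\<^sub>v n)
      \<longleftrightarrow> (\<forall>u\<in>carrier_vec n. ?T *\<^sub>v u + u = 0\<^sub>v n \<longrightarrow> u = 0\<^sub>v n)"
  proof
    assume A: "\<forall>u\<in>carrier_vec n. u + ?T *\<^sub>v (?T *\<^sub>v u) = 0\<^sub>v n \<longrightarrow> u = 0\<^sub>v n"
    show "\<forall>u\<in>carrier_vec n. ?T *\<^sub>v u + u = 0\<^sub>v n \<longrightarrow> u = 0\<^sub>v n"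
    proof (intro ballI impI)
      fix u :: "'a vec" assume u: "u \<in> carrier_vec n" and z: "?T *\<^sub>v u + u = 0\<^sub>v n"
      have "u + ?T *\<^sub>v (?T *\<^sub>v u) = ?T *\<^sub>v (?T *\<^sub>v u + u) + (?T *\<^sub>v u + u)"
        using V_char[OF ch2 u, of a b] by simp
      also have "\<dots> = 0\<^sub>v n" unfolding z T_zero by simp
      finally show "u = 0\<^sub>v n" using A u by blast
    qed
  next
    assume B: "\<forall>u\<in>carrier_vec n. ?T *\<^sub>v u + u = 0\<^sub>v n \<longrightarrow> u = 0\<^sub>v n"
    show "\<forall>u\<in>carrier_vec n. u + ?T *\<^sub>v (?T *\<^sub>v u) = 0\<^sub>v n \<longrightarrow> u = 0\<^sub>v n"
    proof (intro ballI impI)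
      fix u :: "'a vec" assume u: "u \<in> carrier_vec n" and z: "u + ?T *\<^sub>v (?T *\<^sub>v u) = 0\<^sub>v n"
      have wc: "?T *\<^sub>v u + u \<in> carrier_vec n" using u by (intro carrier_vecI) (simp add: carrier_vecD)
      have "?T *\<^sub>v (?T *\<^sub>v u + u) + (?T *\<^sub>v u + u) = 0\<^sub>v n"
        using V_char[OF ch2 u, of a b] z by simp
      hence "?T *\<^sub>v u + u = 0\<^sub>v n" using B wc by blast
      thus "u = 0\<^sub>v n" using B u by blast
    qed
  qed
  have s3: "?T *\<^sub>v u + u = 0\<^sub>v n \<longleftrightarrow> (\<forall>i<n. (a+1)*u$i + (if 0<i then b*u$(i-1) else 0)
            + (if i+1<n then b*u$(i+1) else 0) = 0)" if u: "u \<in> carrier_vec n" for u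
  proof -
    have un: "dim_vec u = n" using u by (rule carrier_vecD)
    have idx: "(?T *\<^sub>v u + u) $ i = (a+1)*u$i + (if 0<i then b*u$(i-1) else 0)
            + (if i+1<n then b*u$(i+1) else 0)" if i: "i < n" for i
      using T_row[OF u i, of a b] i un by (simp add: algebra_simps)
    show ?thesis
    proof
      assume "?T *\<^sub>v u + u = 0\<^sub>v n"
      thus "\<forall>i<n. (a+1)*u$i + (if 0<i then b*u$(i-1) else 0) + (if i+1<n then b*u$(i+1) else 0) = 0"
        using idx by (metis index_zero_vec(1))
    next
      assume "\<forall>i<n. (a+1)*u$i + (if 0<i then b*u$(i-1) else 0) + (if i+1<n then b*u$(i+1) else 0) = 0"
      thus "?T *\<^sub>v u + u = 0\<^sub>v n" using idx un by (intro eq_vecI) auto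
    qed
  qed
  show ?thesis unfolding s1 s2 kernel_R[OF ch2 b n, symmetric]
    using s3 by blast
qed




theorem theorem2p9:
  fixes a b :: "'a::{finite,field}" and n r m k :: nat
  assumes q_pow2: "card (UNIV :: 'a set) = 2 ^ k"
    and b_nz: "b \<noteq> 0"
    and n_ge: "n \<ge> 2"
    and r_dvd: "2 ^ r dvd n + 1"
    and r_ndvd: "\<not> 2 ^ (r + 1) dvd n + 1"
    and m_def: "n + 1 = 2 ^ r * (m + 1)"
    and r_pos: "r \<ge> 1"
  shows "even m
    \<and> (m > 0 \<longrightarrow> (\<forall>\<theta> :: 'a alg_closure. primitive_root_of_unity (m + 1) \<theta> \<longrightarrow>
          (is_LCD (2 * n) (C_hat n a b) \<longleftrightarrow>
             to_ac (a / b) \<notin> {- to_ac (1 / b)} \<union>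
               {- to_ac (1 / b) + \<theta> ^ i + inverse \<theta> ^ i | i. 1 \<le> i \<and> i \<le> m div 2})))
    \<and> (m = 0 \<longrightarrow> (is_LCD (2 * n) (C_hat n a b) \<longleftrightarrow> a \<noteq> 1))"
proof -
  have ch2: "\<And>x::'a. x + x = 0" by (rule char2[OF q_pow2])
  have ch2K: "\<And>x::'a alg_closure. x + x = 0"
  proof -
    fix x :: "'a alg_closure"
    have "(1::'a alg_closure) + 1 = to_ac (1 + 1)" by simp
    also have "\<dots> = 0" using ch2[of 1] by simp
    finally have "(1 + 1) * x = 0" by simp
    thus "x + x = 0" by (simp add: distrib_right)
  qed
  have n1: "n \<ge> 1" using n_ge by simp
  have ev: "even m"
  proof (rule ccontr)
    assume "odd m"
    then obtain j where "m + 1 = 2 * j" by (metis evenE odd_add odd_one)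
    hence "n + 1 = 2^(r+1) * j" using m_def by simp
    thus False using r_ndvd by simp
  qed
  define Y where "Y = to_ac ((a+1)/b)"
  have LR: "is_LCD (2 * n) (C_hat n a b) \<longleftrightarrow> R Y (n+1) \<noteq> 0"
    unfolding LCD_iff_R[OF ch2 b_nz n1] Y_def R_to_ac[symmetric] by simp
  have zer: "R Y (n+1) = 0 \<longleftrightarrow> Y = 0 \<or> (\<exists>t. t^(m+1) = 1 \<and> t \<noteq> 1 \<and> Y = t + inverse t)"
  proof
    assume "R Y (n+1) = 0"
    thus "Y = 0 \<or> (\<exists>t. t^(m+1) = 1 \<and> t \<noteq> 1 \<and> Y = t + inverse t)"
      by (rule R_root_fwd[OF ch2K m_def])
  next
    assume "Y = 0 \<or> (\<exists>t. t^(m+1) = 1 \<and> t \<noteq> 1 \<and> Y = t + inverse t)"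
    thus "R Y (n+1) = 0"
    proof
      assume "Y = 0"
      moreover have "n + 1 = 2 * (2^(r-1)*(m+1))"
      proof -
        obtain r' where rr: "r = Suc r'" using r_pos by (cases r) auto
        show ?thesis using m_def by (simp add: rr)
      qed
      ultimately show ?thesis using R_zero_even by metis
    next
      assume "\<exists>t. t^(m+1) = 1 \<and> t \<noteq> 1 \<and> Y = t + inverse t"
      thus ?thesis using R_root_bwd[OF ch2K m_def] by blast
    qed
  qed
  have Ysum: "Y = to_ac (a/b) + to_ac (1/b)" unfolding Y_def by (simp add: add_divide_distrib)
  have part2: "m > 0 \<longrightarrow> (\<forall>\<theta> :: 'a alg_closure. primitive_root_of_unity (m + 1) \<theta> \<longrightarrow>
          (is_LCD (2 * n) (C_hat n a b) \<longleftrightarrow>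
             to_ac (a / b) \<notin> {- to_ac (1 / b)} \<union>
               {- to_ac (1 / b) + \<theta> ^ i + inverse \<theta> ^ i | i. 1 \<le> i \<and> i \<le> m div 2}))"
  proof (intro impI allI)
    fix \<theta> :: "'a alg_closure" assume prim: "primitive_root_of_unity (m + 1) \<theta>"
    have mem: "to_ac (a / b) \<in> {- to_ac (1 / b)} \<union>
               {- to_ac (1 / b) + \<theta> ^ i + inverse \<theta> ^ i | i. 1 \<le> i \<and> i \<le> m div 2}
       \<longleftrightarrow> Y = 0 \<or> (\<exists>i. 1 \<le> i \<and> i \<le> m div 2 \<and> Y = \<theta>^i + inverse \<theta>^i)"
      unfolding Ysum by (auto simp: algebra_simps eq_neg_iff_add_eq_0)
    show "is_LCD (2 * n) (C_hat n a b) \<longleftrightarrow> to_ac (a / b) \<notin> {- to_ac (1 / b)} \<union>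
               {- to_ac (1 / b) + \<theta> ^ i + inverse \<theta> ^ i | i. 1 \<le> i \<and> i \<le> m div 2}"
      unfolding mem LR zer theta_roots[OF prim ev] by blast
  qed
  have part3: "m = 0 \<longrightarrow> (is_LCD (2 * n) (C_hat n a b) \<longleftrightarrow> a \<noteq> 1)"
  proof
    assume m0: "m = 0"
    have "\<not> (\<exists>t. t^(m+1) = 1 \<and> t \<noteq> 1 \<and> Y = t + inverse t)" using m0 by simp
    hence "is_LCD (2 * n) (C_hat n a b) \<longleftrightarrow> Y \<noteq> 0" unfolding LR zer by blast
    also have "\<dots> \<longleftrightarrow> a + 1 \<noteq> 0" unfolding Y_def to_ac_eq_0_iff using b_nz by simp
    also have "\<dots> \<longleftrightarrow> a \<noteq> 1" using ch2[of 1] by (metis add_right_cancel)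
    finally show "is_LCD (2 * n) (C_hat n a b) \<longleftrightarrow> a \<noteq> 1" .
  qed
  show ?thesis using ev part2 part3 by blast
qed


end
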